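(* Let $\Sigma$ be a finite alphabet. There is a family of linear-time properties $(\varphi_n)_{n\in\mathbb{N}}$ over $\Sigma$ such that, for every $n$, every (nondeterministic) parity automaton $\mathcal{A}$ over $\Sigma$ that is $n$-lasso-precise for $\varphi_n$ (i.e., $L(\mathcal{A})\subseteq\varphi_n$ and $L_n(L(\mathcal{A}))=L_n(\varphi_n)$) has at least $|\Sigma|^n$ states.
   Context: A linear-time property over $\Sigma$ is a set $\varphi \subseteq \Sigma^\omega$. A lasso of length $n$ is a pair $(u,v)$ with $u\in\Sigma^*$, $v\in\Sigma^+$, $|u\cdot v|=n$, inducing the word $u\cdot v^\omega$. For a property $\psi$, $L_n(\psi)=\{u\cdot v^\omega \in \psi \mid u\in\Sigma^*, v\in\Sigma^+, |u\cdot v|=n\}$. A nondeterministic parity automaton over $\Sigma$ is $\mathcal{A}=(Q,Q_0,\delta,\mu)$ with finite state set $Q$, initial states $Q_0\subseteq Q$, transition function $\delta: Q\times\Sigma\to\mathcal{P}(Q)$, and coloring $\mu: Q\to C$ for a finite $C\subset\mathbb{N}$. A run on $\alpha_1\alpha_2\cdots$ is a sequence $q_0q_1\cdots$ with $q_0\in Q_0$ and $q_{i+1}\in\delta(q_i,\alpha_{i+1})$; it is accepting if the highest color occurring infinitely often in $\mu(q_0)\mu(q_1)\cdots$ is even; $L(\mathcal{A})$ is the set of words having an accepting run. *)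

theory Defs
  imports Main
begin

text \<open>Infinite words over the alphabet 'a are functions nat \<Rightarrow> 'a.
  The alphabet \<Sigma> is the (finite) universe of the type 'a.\<close>

type_synonym 'a word = "nat \<Rightarrow> 'a"

definition lasso :: "'a list \<Rightarrow> 'a list \<Rightarrow> 'a word" where
  "lasso u v = (\<lambda>i. if i < length u then u ! i
                    else v ! ((i - length u) mod length v))"

definition lasso_lang :: "nat \<Rightarrow> 'a word set \<Rightarrow> 'a word set" where
  "lasso_lang n \<psi> = {w \<in> \<psi>. \<exists>u v. v \<noteq> [] \<and> length (u @ v) = n \<and> w = lasso u v}"

text \<open>Nondeterministic parity automata; states are natural numbers
  (every finite automaton is isomorphic to one with such states).\<close>

record 'a npa =
  states :: "nat set"
  init :: "nat set"
  trans :: "nat \<Rightarrow> 'a \<Rightarrow> nat set"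
  color :: "nat \<Rightarrow> nat"

definition wf_npa :: "'a npa \<Rightarrow> bool" where
  "wf_npa A \<longleftrightarrow> finite (states A) \<and> init A \<subseteq> states A \<and>
     (\<forall>q \<in> states A. \<forall>a. trans A q a \<subseteq> states A)"

definition is_run :: "'a npa \<Rightarrow> 'a word \<Rightarrow> (nat \<Rightarrow> nat) \<Rightarrow> bool" where
  "is_run A w r \<longleftrightarrow> r 0 \<in> init A \<and> (\<forall>i. r (Suc i) \<in> trans A (r i) (w i))"

definition parity_accepting :: "'a npa \<Rightarrow> (nat \<Rightarrow> nat) \<Rightarrow> bool" where
  "parity_accepting A r \<longleftrightarrow>
     (\<exists>c. even c \<and> (\<exists>\<^sub>\<infinity>i. color A (r i) = c) \<and>
          (\<forall>c'. (\<exists>\<^sub>\<infinity>i. color A (r i) = c') \<longrightarrow> c' \<le> c))"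

definition npa_lang :: "'a npa \<Rightarrow> 'a word set" where
  "npa_lang A = {w. \<exists>r. is_run A w r \<and> parity_accepting A r}"

definition lasso_precise :: "nat \<Rightarrow> 'a npa \<Rightarrow> 'a word set \<Rightarrow> bool" where
  "lasso_precise n A \<phi> \<longleftrightarrow> npa_lang A \<subseteq> \<phi> \<and> lasso_lang n (npa_lang A) = lasso_lang n \<phi>"

end

theory Submission
  imports Defs "HOL-Library.Infinite_Set"
begin

lemma run_in_states:
  assumes "wf_npa A" "is_run A w r" shows "r i \<in> states A"
  using assms by (induction i) (auto simp: wf_npa_def is_run_def, blast)

lemma infm_tail:
  fixes f g :: "nat \<Rightarrow> 'b" and n :: nat
  assumes "\<forall>i\<ge>n. f i = g i"
  shows "(\<exists>\<^sub>\<infinity>i. P (f i)) = (\<exists>\<^sub>\<infinity>i. P (g i))"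
proof -
  have "(\<forall>m. \<exists>k>m. P (f k)) = (\<forall>m. \<exists>k>m. P (g k))"
  proof
    assume h: "\<forall>m. \<exists>k>m. P (f k)"
    show "\<forall>m. \<exists>k>m. P (g k)"
    proof
      fix m obtain k where "k > max m n" "P (f k)" using h by blast
      then show "\<exists>k>m. P (g k)" proof (intro exI[of _ k] conjI)
        show "m < k" using \<open>k > max m n\<close> by (simp add: max_less_iff_conj)
        have "f k = g k" using assms \<open>k > max m n\<close> by simp
        then show "P (g k)" using \<open>P (f k)\<close> by simp
      qed
    qed
  next
    assume h: "\<forall>m. \<exists>k>m. P (g k)"
    show "\<forall>m. \<exists>k>m. P (f k)"
    proof
      fix m obtain k where "k > max m n" "P (g k)" using h by blast
      then show "\<exists>k>m. P (f k)" proof (intro exI[of _ k] conjI)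
        show "m < k" using \<open>k > max m n\<close> by (simp add: max_less_iff_conj)
        have "f k = g k" using assms \<open>k > max m n\<close> by simp
        then show "P (f k)" using \<open>P (g k)\<close> by simp
      qed
    qed
  qed
  then show ?thesis by (simp add: INFM_nat)
qed

lemma acc_tail:
  fixes f g :: "nat \<Rightarrow> nat" and n :: nat
  assumes "\<forall>i\<ge>n. f i = g i" "parity_accepting A g"
  shows "parity_accepting A f"
proof -
  have "\<And>c. (\<exists>\<^sub>\<infinity>i. color A (f i) = c) = (\<exists>\<^sub>\<infinity>i. color A (g i) = c)"
    using infm_tail[OF assms(1), of "\<lambda>x. color A x = c" for c] by blast
  then show ?thesis using assms(2) unfolding parity_accepting_def by simp
qed

theorem theorem2:
  "\<exists>\<phi> :: nat \<Rightarrow> ('a::finite) word set. \<forall>n \<ge> 1. \<forall>A :: 'a npa.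
     wf_npa A \<and> lasso_precise n A (\<phi> n) \<longrightarrow> card (UNIV :: 'a set) ^ n \<le> card (states A)"
proof (intro exI[of _ "\<lambda>n. {w. \<forall>i. w (i+n) = w i}"] allI impI, elim conjE)
  fix n :: nat and A :: "'a npa"
  assume n1: "n \<ge> 1" and wf: "wf_npa A"
    and lp: "lasso_precise n A {w. \<forall>i. w (i+n) = w i}"
  define U where "U = {xs :: 'a list. set xs \<subseteq> UNIV \<and> length xs = n}"
  have cardU: "card U = card (UNIV :: 'a set) ^ n"
    unfolding U_def by (rule card_lists_length_eq) simp
  have lw: "lasso [] u = (\<lambda>i. u ! (i mod n))" if "u \<in> U" for u :: "'a list"
    using that by (auto simp: U_def lasso_def)
  have acc: "\<exists>r. is_run A (lasso [] u) r \<and> parity_accepting A r" if "u \<in> U" for u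
  proof -
    have ne: "u \<noteq> []" using that n1 by (auto simp: U_def)
    have "lasso [] u \<in> {w. \<forall>i. w (i+n) = w i}" using lw[OF that] by simp
    then have "lasso [] u \<in> lasso_lang n {w. \<forall>i. w (i+n) = w i}"
      unfolding lasso_lang_def using ne that
      apply (simp add: U_def)
      apply (rule exI[of _ "[]"], rule exI[of _ u])
      by simp
    then have "lasso [] u \<in> npa_lang A"
      using lp unfolding lasso_precise_def lasso_lang_def by blast
    then show ?thesis by (auto simp: npa_lang_def)
  qed
  then obtain R where R: "\<And>u. u \<in> U \<Longrightarrow> is_run A (lasso [] u) (R u) \<and> parity_accepting A (R u)"
    by metis
  have inj: "inj_on (\<lambda>u. R u n) U"
  proof (rule inj_onI)
    fix u u' assume u: "u \<in> U" and u': "u' \<in> U" and eq: "R u n = R u' n"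
    define r where "r = (\<lambda>i. if i \<le> n then R u i else R u' i)"
    define w where "w = lasso u u'"
    have lu: "length u = n" "length u' = n" using u u' by (auto simp: U_def)
    have wl: "w i = (if i < n then lasso [] u i else lasso [] u' i)" for i
    proof (cases "i < n")
      case True then show ?thesis using lu lw[OF u] by (simp add: w_def lasso_def)
    next
      case False
      then have "(i - n) mod n = i mod n" by (simp add: le_mod_geq)
      then show ?thesis using False lu lw[OF u'] by (simp add: w_def lasso_def)
    qed
    have run: "is_run A w r"
      unfolding is_run_def
    proof (intro conjI allI)
      show "r 0 \<in> init A" using R[OF u] by (simp add: r_def is_run_def)
      fix i
      show "r (Suc i) \<in> trans A (r i) (w i)"
      proof (cases "i < n")
        case True then show ?thesis using R[OF u] wl[of i] by (simp add: r_def is_run_def)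
      next
        case False
        then show ?thesis using R[OF u'] wl[of i] eq
          by (cases "i = n") (auto simp: r_def is_run_def)
      qed
    qed
    have "parity_accepting A r"
      by (rule acc_tail[of n _ "R u'"]) (use R[OF u'] eq in \<open>auto simp: r_def\<close>)
    with run have "w \<in> npa_lang A" by (auto simp: npa_lang_def)
    then have per: "\<forall>i. w (i+n) = w i" using lp by (auto simp: lasso_precise_def)
    show "u = u'"
    proof (rule nth_equalityI)
      show "length u = length u'" using lu by simp
      fix i assume "i < length u"
      then have "i < n" using lu by simp
      then show "u ! i = u' ! i" using per[rule_format, of i] lu
        by (simp add: w_def lasso_def)
    qed
  qed
  have sub: "(\<lambda>u. R u n) ` U \<subseteq> states A"
    using R run_in_states[OF wf] by blast
  have fin: "finite (states A)" using wf by (simp add: wf_npa_def)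
  have "card U \<le> card (states A)"
    using card_inj_on_le[OF inj sub fin] .
  then show "card (UNIV :: 'a set) ^ n \<le> card (states A)" using cardU by simp
qed

end
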